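(* Let $\varphi$ be a Boolean formula in 3-CNF and let $G$ be the graph constructed from $\varphi$ as described in the context. Let $X\subseteq V(G)$ be a minimum cluster deletion set of $G$. Then, for every variable gadget of $G$ (i.e., every $j\in\{1,\dots,n\}$), $X$ contains all vertices of one of the two sides $T_{1,j},T_{2,j}$.
   Context: Let $\varphi$ consist of clauses $C_1,\dots,C_m$ over variables $x_1,\dots,x_n$, each clause containing exactly three literals, $C_i=(L_i^1\vee L_i^2\vee L_i^3)$. The graph $G$ has vertex set $\{u_{r,s,i}: r\in\{1,2,3\}, s\in\{1,\dots,7\}, i\in\{1,\dots,m\}\}\cup\{v_{r,s,j}: r\in\{1,2\}, s\in\{1,2,3\}, j\in\{1,\dots,n\}\}$ and edge set consisting of: $\{u_{r,s,i},u_{r',s',i}\}$ for all $r\ne r'$ in $\{1,2,3\}$, all $s,s'\in\{1,\dots,7\}$, all $i$; $\{v_{1,s,j},v_{2,s',j}\}$ for all $s,s'\in\{1,2,3\}$, all $j$; $\{u_{r,s,i},v_{1,s',j}\}$ for all $s\in\{1,\dots,7\}$, $s'\in\{1,2,3\}$ whenever $L_i^r = x_j$; and $\{u_{r,s,i},v_{2,s',j}\}$ for all $s\in\{1,\dots,7\}$, $s'\in\{1,2,3\}$ whenever $L_i^r=\neg x_j$. The clause gadget of $C_i$ has sides $S_{r,i}=\{u_{r,s,i}: s\in\{1,\dots,7\}\}$, $r=1,2,3$; the variable gadget of $x_j$ is the complete bipartite graph on $\{v_{r,s,j}\}$ with sides $T_{r,j}=\{v_{r,s,j}: s\in\{1,2,3\}\}$,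 $r=1,2$. A cluster deletion set of $G$ is a set $X\subseteq V(G)$ such that $G-X$ contains no induced path on three vertices; it is minimum if it has the smallest possible size. *)

theory Defs
  imports Main
begin

text \<open>A 3-CNF formula with clauses C_1..C_m over variables x_1..x_n is given by
  L :: nat => nat => nat * bool, where L i r = (j, True) means L_i^r = x_j and
  L i r = (j, False) means L_i^r = not x_j (i in 1..m, r in 1..3).\<close>

definition wf_3cnf :: "nat \<Rightarrow> nat \<Rightarrow> (nat \<Rightarrow> nat \<Rightarrow> nat \<times> bool) \<Rightarrow> bool" where
  "wf_3cnf n m L \<longleftrightarrow> (\<forall>i\<in>{1..m}. \<forall>r\<in>{1..3}. fst (L i r) \<in> {1..n})"

datatype vtx = U nat nat nat | V nat nat nat

definition verts :: "nat \<Rightarrow> nat \<Rightarrow> vtx set" where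
  "verts n m =
     {U r s i | r s i. r \<in> {1..3} \<and> s \<in> {1..7} \<and> i \<in> {1..m}} \<union>
     {V r s j | r s j. r \<in> {1..2} \<and> s \<in> {1..3} \<and> j \<in> {1..n}}"

fun edge0 :: "nat \<Rightarrow> nat \<Rightarrow> (nat \<Rightarrow> nat \<Rightarrow> nat \<times> bool) \<Rightarrow> vtx \<Rightarrow> vtx \<Rightarrow> bool" where
  "edge0 n m L (U r s i) (U r' s' i') \<longleftrightarrow>
     r \<in> {1..3} \<and> r' \<in> {1..3} \<and> r \<noteq> r' \<and> s \<in> {1..7} \<and> s' \<in> {1..7} \<and> i \<in> {1..m} \<and> i' = i"
| "edge0 n m L (V r s j) (V r' s' j') \<longleftrightarrow>
     r = 1 \<and> r' = 2 \<and> s \<in> {1..3} \<and> s' \<in> {1..3} \<and> j \<in> {1..n} \<and> j' = j"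
| "edge0 n m L (U r s i) (V r' s' j) \<longleftrightarrow>
     r \<in> {1..3} \<and> s \<in> {1..7} \<and> i \<in> {1..m} \<and> s' \<in> {1..3} \<and> j \<in> {1..n} \<and>
     ((r' = 1 \<and> L i r = (j, True)) \<or> (r' = 2 \<and> L i r = (j, False)))"
| "edge0 n m L (V r s j) (U r' s' i) \<longleftrightarrow> False"

definition adj :: "nat \<Rightarrow> nat \<Rightarrow> (nat \<Rightarrow> nat \<Rightarrow> nat \<times> bool) \<Rightarrow> vtx \<Rightarrow> vtx \<Rightarrow> bool" where
  "adj n m L x y \<longleftrightarrow> edge0 n m L x y \<or> edge0 n m L y x"

definition cluster_deletion_set :: "'a set \<Rightarrow> ('a \<Rightarrow> 'a \<Rightarrow> bool) \<Rightarrow> 'a set \<Rightarrow> bool" where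
  "cluster_deletion_set Vs E X \<longleftrightarrow> X \<subseteq> Vs \<and>
     \<not> (\<exists>a b c. a \<in> Vs - X \<and> b \<in> Vs - X \<and> c \<in> Vs - X \<and> a \<noteq> c \<and>
            E a b \<and> E b c \<and> \<not> E a c)"

definition min_cluster_deletion_set :: "'a set \<Rightarrow> ('a \<Rightarrow> 'a \<Rightarrow> bool) \<Rightarrow> 'a set \<Rightarrow> bool" where
  "min_cluster_deletion_set Vs E X \<longleftrightarrow> cluster_deletion_set Vs E X \<and>
     (\<forall>Y. cluster_deletion_set Vs E Y \<longrightarrow> card X \<le> card Y)"

definition side_T :: "nat \<Rightarrow> nat \<Rightarrow> vtx set" where
  "side_T r j = {V r s j | s. s \<in> {1..3}}"

end

theory Submission
  imports Defs
begin

lemma finite_verts: "finite (verts n m)"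
proof -
  have 1: "{U r s i | r s i. r \<in> {1..3} \<and> s \<in> {1..7} \<and> i \<in> {1..m}}
      = (\<lambda>(r,s,i). U r s i) ` ({1..3}\<times>{1..7}\<times>{1..m})"
    by (auto simp: image_iff)
  have 2: "{V r s j | r s j. r \<in> {1..2} \<and> s \<in> {1..3} \<and> j \<in> {1..n}}
      = (\<lambda>(r,s,j). V r s j) ` ({1..2}\<times>{1..3}\<times>{1..n})"
    by (auto simp: image_iff)
  show ?thesis unfolding verts_def 1 2 by simp
qed

lemma adj_sym: "adj n m L x y = adj n m L y x"
  unfolding adj_def by blast

lemma adj_V1:
  assumes "adj n m L y (V 1 s j)"
  shows "(\<exists>s'. y = V 2 s' j) \<or> (\<exists>r s' i. y = U r s' i \<and> L i r = (j,True))"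
  using assms by (cases y) (auto simp: adj_def)

theorem lemma11:
  fixes n m :: nat and L :: "nat \<Rightarrow> nat \<Rightarrow> nat \<times> bool" and X :: "vtx set"
  assumes "wf_3cnf n m L"
    and "min_cluster_deletion_set (verts n m) (adj n m L) X"
  shows "\<forall>j\<in>{1..n}. side_T 1 j \<subseteq> X \<or> side_T 2 j \<subseteq> X"
proof (rule ccontr)
  assume "\<not> ?thesis"
  then obtain j where j: "j \<in> {1..n}" and n1: "\<not> side_T 1 j \<subseteq> X" and n2: "\<not> side_T 2 j \<subseteq> X" by blast
  from n1 obtain s1 where s1: "s1 \<in> {1..3}" "V 1 s1 j \<notin> X" unfolding side_T_def by blast
  from n2 obtain s2 where s2: "s2 \<in> {1..3}" "V 2 s2 j \<notin> X" unfolding side_T_def by blast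
  have cdsX: "cluster_deletion_set (verts n m) (adj n m L) X"
    and minX: "\<And>Y. cluster_deletion_set (verts n m) (adj n m L) Y \<Longrightarrow> card X \<le> card Y"
    using assms(2) unfolding min_cluster_deletion_set_def by auto
  have XV: "X \<subseteq> verts n m" using cdsX unfolding cluster_deletion_set_def by blast
  have noP3: "\<And>a b c. a \<in> verts n m - X \<Longrightarrow> b \<in> verts n m - X \<Longrightarrow> c \<in> verts n m - X \<Longrightarrow> a \<noteq> c
      \<Longrightarrow> adj n m L a b \<Longrightarrow> adj n m L b c \<Longrightarrow> adj n m L a c"
    using cdsX unfolding cluster_deletion_set_def by blast
  have inV1: "\<And>s. s \<in> {1..3} \<Longrightarrow> V 1 s j \<in> verts n m" using j unfolding verts_def by auto
  have inV2: "\<And>s. s \<in> {1..3} \<Longrightarrow> V 2 s j \<in> verts n m" using j unfolding verts_def by auto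
  let ?a = "V 1 s1 j" and ?b = "V 2 s2 j"
  have A: "V 1 s j \<in> X" if "s \<in> {1..3}" "s \<noteq> s1" for s
  proof (rule ccontr)
    assume "V 1 s j \<notin> X"
    from noP3[of "V 1 s j" ?b ?a] this that s1 s2 inV1 inV2 j show False
      by (auto simp: adj_def)
  qed
  have B: "V 2 s j \<in> X" if "s \<in> {1..3}" "s \<noteq> s2" for s
  proof (rule ccontr)
    assume "V 2 s j \<notin> X"
    from noP3[of "V 2 s j" ?a ?b] this that s1 s2 inV1 inV2 j show False
      by (auto simp: adj_def)
  qed
  define D where "D = side_T 1 j - {?a}"
  define Y where "Y = insert ?b (X - D)"
  have DX: "D \<subseteq> X" unfolding D_def side_T_def using A by auto
  have T1: "side_T 1 j = (\<lambda>s. V 1 s j) ` {1..3}" unfolding side_T_def by auto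
  have "card (side_T 1 j) = 3" unfolding T1 by (subst card_image) (auto simp: inj_on_def)
  hence cD: "card D = 2" unfolding D_def using s1 by (simp add: side_T_def)
  have finX: "finite X" using XV finite_verts finite_subset by blast
  have C: False if y: "y \<in> verts n m - Y" "adj n m L y (V 1 s j)" "s \<in> {1..3}" "s \<noteq> s1" for y s
  proof -
    from adj_V1[OF y(2)] show False
    proof
      assume "\<exists>s'. y = V 2 s' j"
      then obtain s' where ys: "y = V 2 s' j" by blast
      with y have "s' \<in> {1..3}" unfolding verts_def by auto
      with ys y B show False unfolding Y_def D_def side_T_def by (cases "s' = s2") auto
    next
      assume "\<exists>r s' i. y = U r s' i \<and> L i r = (j,True)"
      then obtain r s' i where ys: "y = U r s' i" and L: "L i r = (j,True)" by blast
      have yX: "y \<notin> X" using y ys unfolding Y_def D_def side_T_def by auto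
      have "adj n m L y ?a" using y(2) ys L s1 y(3) by (auto simp: adj_def)
      moreover have "adj n m L ?a ?b" using s1 s2 j by (auto simp: adj_def)
      moreover have "\<not> adj n m L y ?b" using ys L by (auto simp: adj_def)
      ultimately show False using noP3[of y ?a ?b] y yX s1 s2 inV1 inV2 ys by auto
    qed
  qed
  have C': False if "y \<in> verts n m - Y" "x \<in> D" "adj n m L y x" for x y
  proof -
    from that(2) obtain s where xs: "x = V 1 s j" "s \<in> {1..3}" "s \<noteq> s1"
      unfolding D_def side_T_def by blast
    show False using C[OF that(1)] xs that(3) by blast
  qed
  have cdsY: "cluster_deletion_set (verts n m) (adj n m L) Y"
    unfolding cluster_deletion_set_def
  proof (intro conjI notI)
    show "Y \<subseteq> verts n m" unfolding Y_def using XV inV2 s2 by auto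
  next
    assume "\<exists>a b c. a \<in> verts n m - Y \<and> b \<in> verts n m - Y \<and> c \<in> verts n m - Y \<and> a \<noteq> c \<and>
            adj n m L a b \<and> adj n m L b c \<and> \<not> adj n m L a c"
    then obtain a b c where abc: "a \<in> verts n m - Y" "b \<in> verts n m - Y" "c \<in> verts n m - Y" "a \<noteq> c"
      "adj n m L a b" "adj n m L b c" "\<not> adj n m L a c" by blast
    have "adj n m L b a" using abc(5) adj_sym by blast
    hence "a \<notin> D" using C'[OF abc(2)] by blast
    moreover have "b \<notin> D" using C'[OF abc(1)] abc(5) by blast
    moreover have "c \<notin> D" using C'[OF abc(2)] abc(6) by blast
    ultimately have "a \<notin> X" "b \<notin> X" "c \<notin> X" using abc unfolding Y_def by auto
    thus False using noP3[of a b c] abc by auto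
  qed
  have "card Y = Suc (card (X - D))" unfolding Y_def using finX s2 by simp
  also have "card (X - D) = card X - 2" using card_Diff_subset[OF finite_subset[OF DX finX] DX] cD by simp
  finally have "card Y < card X" using card_mono[OF finX DX] cD by simp
  with minX[OF cdsY] show False by simp
qed

end
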